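(* Let $A,G$ be $n\times n$ symmetric matrices with $G\succeq A\succ0$. Then for any $u\in\mathbb{R}^n\setminus\{0\}$, $$V(A,G)-V(A,\mathrm{SR1}(A,G,u))=\ln\left(1+\nu^2(A,G,u)\right).$$
   Context: $V(A,G)=\ln\det(GA^{-1})$. $\nu(A,G,u)=\left(\frac{u^\top(G-A)G^{-1}(G-A)u}{u^\top(A-AG^{-1}A)u}\right)^{1/2}$ for $G\succeq A$, with the convention (used in the paper) that $\nu(A,G,u)=0$ when $(G-A)u=0$. $\mathrm{SR1}(A,G,u)=G$ if $(G-A)u=0$, and otherwise $\mathrm{SR1}(A,G,u)=G-\frac{(G-A)uu^\top(G-A)}{u^\top(G-A)u}$. *)

theory Defs
  imports "HOL-Analysis.Analysis"
begin

definition psd :: "real^'n^'n \<Rightarrow> bool" where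
  "psd M \<longleftrightarrow> (\<forall>x. 0 \<le> x \<bullet> (M *v x))"

definition pd :: "real^'n^'n \<Rightarrow> bool" where
  "pd M \<longleftrightarrow> (\<forall>x. x \<noteq> 0 \<longrightarrow> 0 < x \<bullet> (M *v x))"

definition symm :: "real^'n^'n \<Rightarrow> bool" where
  "symm M \<longleftrightarrow> transpose M = M"

definition Vf :: "real^'n^'n \<Rightarrow> real^'n^'n \<Rightarrow> real" where
  "Vf A G = ln (det (G ** matrix_inv A))"

definition nu :: "real^'n^'n \<Rightarrow> real^'n^'n \<Rightarrow> real^'n \<Rightarrow> real" where
  "nu A G u = (if (G - A) *v u = 0 then 0 else
     sqrt ((u \<bullet> ((G - A) ** matrix_inv G ** (G - A) *v u)) /
           (u \<bullet> ((A - A ** matrix_inv G ** A) *v u))))"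

definition SR1 :: "real^'n^'n \<Rightarrow> real^'n^'n \<Rightarrow> real^'n \<Rightarrow> real^'n^'n" where
  "SR1 A G u = (if (G - A) *v u = 0 then G else
     G - (1 / (u \<bullet> ((G - A) *v u))) *\<^sub>R
         (\<chi> i j. ((G - A) *v u) $ i * (u v* (G - A)) $ j))"

end

theory Submission
  imports Defs
begin

lemma mat1_comp: "(mat 1 :: real^'n^'n) $ i $ j = (if i = j then 1 else 0)"
  by (simp add: mat_def)

lemma det_L:
  fixes a :: "real^'n"
  shows "det (\<chi> i j. if j = k then (if i = k then 1 else a$i) else (if i = j then 1 else 0) :: real^'n^'n) = 1"
proof -
  let ?a = "(\<chi> i. if i = k then 1 else a$i) :: real^'n"
  have "det (\<chi> i j. if j = k then (mat 1 *v ?a)$i else (mat 1 :: real^'n^'n)$i$j) = ?a$k * det (mat 1 :: real^'n^'n)"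
    by (rule cramer_lemma)
  moreover have "(\<chi> i j. if j = k then (mat 1 *v ?a)$i else (mat 1 :: real^'n^'n)$i$j) =
     (\<chi> i j. if j = k then (if i = k then 1 else a$i) else (if i = j then 1 else 0) :: real^'n^'n)"
    by (simp add: vec_eq_iff mat1_comp)
  ultimately show ?thesis by simp
qed

lemma det_P:
  fixes b :: "real^'n"
  shows "det (\<chi> i. if i = k then b else axis i 1 :: real^'n^'n) = b$k"
proof -
  have e1: "det ((\<chi> i. if i = k then sum (\<lambda>i. b$i *s row i (mat 1)) (UNIV::'n set)
                             else row i (mat 1))::real^'n^'n) = b$k * det (mat 1 :: real^'n^'n)"
    by (rule cramer_lemma_transpose)
  have e3: "\<And>i. row i (mat 1 :: real^'n^'n) = axis i 1"
    by (simp add: vec_eq_iff row_def mat_def axis_def)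
  have e2: "sum (\<lambda>i. b$i *s axis i 1) (UNIV::'n set) = (b::real^'n)"
    by (simp add: vec_eq_iff axis_def sum_component if_distrib cong: if_cong)
  show ?thesis using e1 unfolding e2 e3 by simp
qed

lemma det_rank1:
  fixes a b :: "real^'n"
  shows "det (mat 1 + (\<chi> i j. a$i * b$j)) = 1 + a \<bullet> b"
proof (cases "b = 0")
  case True
  then have "(\<chi> i j. a$i * b$j) = (0::real^'n^'n)" by (simp add: vec_eq_iff)
  then show ?thesis using True by simp
next
  case False
  then obtain k where bk: "b$k \<noteq> 0" by (auto simp: vec_eq_iff)
  define M where "M = mat 1 + (\<chi> i j. a$i * b$j)"
  have rowM: "row i M = axis i 1 + a$i *s b" for i
    by (simp add: M_def vec_eq_iff row_def mat1_comp axis_def)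
  have c1: "sum (\<lambda>i. b$i *s row i M) UNIV = (1 + a \<bullet> b) *s b"
    unfolding rowM
    by (simp add: vec_eq_iff sum_component axis_def if_distrib inner_vec_def algebra_simps
         sum.distrib sum_distrib_left sum_distrib_right cong: if_cong)
  have e1: "det ((\<chi> i. if i = k then sum (\<lambda>i. b$i *s row i M) (UNIV::'n set)
                             else row i M)::real^'n^'n) = b$k * det M"
    by (rule cramer_lemma_transpose)
  have e2: "det ((\<chi> i. if i = k then (1 + a \<bullet> b) *s b else row i M)::real^'n^'n)
     = (1 + a \<bullet> b) * det ((\<chi> i. if i = k then b else row i M)::real^'n^'n)"
    by (rule det_row_mul)
  define L where "L = (\<chi> i j. if j = k then (if i = k then 1 else a$i) else (if i = j then 1 else 0) :: real^'n^'n)"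
  define P where "P = (\<chi> i. if i = k then b else axis i 1 :: real^'n^'n)"
  have NLP: "((\<chi> i. if i = k then b else row i M)::real^'n^'n) = L ** P"
  proof -
    have "(L ** P) $ i $ j = (if i = k then b$j else (axis i 1 + a$i *s b)$j)" for i j
    proof (cases "i = k")
      case True
      have "(L ** P) $ i $ j = (\<Sum>l\<in>UNIV. (if l = k then P$l$j else 0))"
        unfolding matrix_matrix_mult_def vec_lambda_beta using True
        by (intro sum.cong) (auto simp: L_def)
      then show ?thesis using True by (simp add: P_def)
    next
      case False
      have "(L ** P) $ i $ j = (\<Sum>l\<in>UNIV. (if l = k then a$i * P$l$j else 0) + (if l = i then P$l$j else 0))"
        unfolding matrix_matrix_mult_def vec_lambda_beta using False
        by (intro sum.cong) (auto simp: L_def)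
      also have "\<dots> = a$i * b$j + (axis i 1)$j"
        using False by (simp add: sum.distrib P_def)
      finally show ?thesis using False by simp
    qed
    then show ?thesis by (simp add: vec_eq_iff rowM)
  qed
  have "det ((\<chi> i. if i = k then b else row i M)::real^'n^'n) = b$k"
    unfolding NLP det_mul L_def P_def det_L det_P by simp
  then have "b$k * det M = b$k * (1 + a \<bullet> b)"
    using e1 e2 unfolding c1 by (simp; metis)
  then show ?thesis using bk by (simp add: M_def)
qed


lemma scaleR_mv: "((t::real) *\<^sub>R (M::real^'n^'m)) *v x = t *\<^sub>R (M *v x)"
  by (simp add: vec_eq_iff matrix_vector_mult_def sum_distrib_left algebra_simps)

lemma pd_inj: assumes "pd M" and "M *v x = 0" shows "x = 0"
  using assms unfolding pd_def by (metis inner_zero_right less_irrefl)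

lemma pd_invertible: fixes M :: "real^'n^'n" assumes "pd M" shows "invertible M"
proof -
  have "\<exists>B. (B::real^'n^'n) ** M = mat 1"
    unfolding matrix_left_invertible_ker using pd_inj[OF assms] by blast
  then show ?thesis using invertible_left_inverse by blast
qed

lemma inv_props: fixes M :: "real^'n^'n" assumes "invertible M"
  shows "M ** matrix_inv M = mat 1" "matrix_inv M ** M = mat 1"
proof -
  have "\<exists>A'. M ** A' = mat 1 \<and> A' ** M = mat 1" using assms unfolding invertible_def by blast
  then have "M ** matrix_inv M = mat 1 \<and> matrix_inv M ** M = mat 1"
    unfolding matrix_inv_def by (rule someI_ex)
  then show "M ** matrix_inv M = mat 1" "matrix_inv M ** M = mat 1" by auto
qed

lemma pd_det_pos: fixes M :: "real^'n^'n" assumes "pd M" shows "det M > 0"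
proof (rule ccontr)
  assume "\<not> det M > 0"
  define f where "f t = det (mat 1 + t *\<^sub>R (M - mat 1))" for t :: real
  have pdt: "pd (mat 1 + t *\<^sub>R (M - mat 1))" if "0 \<le> t" "t \<le> 1" for t
    unfolding pd_def
  proof (intro allI impI)
    fix x :: "real^'n" assume "x \<noteq> 0"
    have "x \<bullet> ((mat 1 + t *\<^sub>R (M - mat 1)) *v x) = (1 - t) * (x \<bullet> x) + t * (x \<bullet> (M *v x))"
      by (simp add: algebra_simps matrix_vector_mult_add_rdistrib scaleR_mv inner_diff_right)
    moreover have "x \<bullet> x > 0" using \<open>x \<noteq> 0\<close> by simp
    moreover have "x \<bullet> (M *v x) > 0" using assms \<open>x \<noteq> 0\<close> unfolding pd_def by blast
    ultimately show "0 < x \<bullet> ((mat 1 + t *\<^sub>R (M - mat 1)) *v x)"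
      using that by (smt (verit) mult_nonneg_nonneg mult_pos_pos)
  qed
  have cont: "continuous_on {0..1} f"
    unfolding f_def det_def
    by (intro continuous_intros)
  have "f 1 \<le> 0" using \<open>\<not> det M > 0\<close> by (simp add: f_def)
  moreover have "0 \<le> f 0" by (simp add: f_def)
  ultimately obtain t where t: "0 \<le> t" "t \<le> 1" "f t = 0"
    using IVT2'[of f 1 0 0, OF _ _ _ cont] by auto
  then show False
    using pd_invertible[OF pdt[OF t(1,2)]] t(3) by (simp add: f_def invertible_det_nz)
qed


lemma symm_inner: fixes M :: "real^'n^'n" assumes "symm M"
  shows "x \<bullet> (M *v y) = (M *v x) \<bullet> y"
proof -
  have "x \<bullet> (M *v y) = (x v* M) \<bullet> y" by (simp add: dot_lmul_matrix)
  also have "x v* M = transpose M *v x" by simp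
  also have "\<dots> = M *v x" using assms by (simp add: symm_def)
  finally show ?thesis .
qed

lemma psd_zero: fixes D :: "real^'n^'n" assumes "symm D" "psd D" "u \<bullet> (D *v u) = 0"
  shows "D *v u = 0"
proof (rule ccontr)
  assume ne: "D *v u \<noteq> 0"
  define v where "v = D *v u"
  define \<alpha> where "\<alpha> = v \<bullet> v"
  define \<beta> where "\<beta> = v \<bullet> (D *v v)"
  have ap: "\<alpha> > 0" using ne by (simp add: \<alpha>_def v_def)
  have bp: "\<beta> \<ge> 0" using assms(2) by (simp add: \<beta>_def psd_def)
  have key: "(u + t *\<^sub>R v) \<bullet> (D *v (u + t *\<^sub>R v)) = 2 * t * \<alpha> + t^2 * \<beta>" for t
  proof -
    have "(u + t *\<^sub>R v) \<bullet> (D *v (u + t *\<^sub>R v)) =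
       u \<bullet> (D *v u) + t * (u \<bullet> (D *v v)) + t * (v \<bullet> (D *v u)) + t * t * (v \<bullet> (D *v v))"
      by (simp add: matrix_vector_right_distrib matrix_vector_mult_scaleR inner_add_left inner_add_right algebra_simps)
    also have "u \<bullet> (D *v v) = v \<bullet> v" using symm_inner[OF assms(1)] v_def by simp
    finally show ?thesis using assms(3) by (simp add: \<alpha>_def \<beta>_def v_def power2_eq_square)
  qed
  define t where "t = - \<alpha> / (\<beta> + 1)"
  have t1: "t * (\<beta> + 1) = - \<alpha>" using bp by (simp add: t_def)
  have tneg: "t < 0" using ap bp by (simp add: t_def divide_pos_pos)
  have "t * \<beta> \<ge> - \<alpha>"
  proof -
    have "t * \<beta> = -\<alpha> - t" using t1 by (simp add: algebra_simps)
    then show ?thesis using tneg by simp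
  qed
  then have "2 * \<alpha> + t * \<beta> > 0" using ap by simp
  then have "t * (2 * \<alpha> + t * \<beta>) < 0" using tneg by (simp add: mult_neg_pos)
  moreover have "0 \<le> 2 * t * \<alpha> + t^2 * \<beta>"
    using assms(2) key[of t] unfolding psd_def by metis
  ultimately show False by (simp add: algebra_simps power2_eq_square)
qed

lemma outer_mult: fixes G :: "real^'n^'n"
  shows "G ** (\<chi> i j. a$i * b$j) = (\<chi> i j. (G *v a)$i * b$j)"
  by (simp add: vec_eq_iff matrix_matrix_mult_def matrix_vector_mult_def sum_distrib_right mult.assoc)


theorem lemma4:
  fixes A G :: "real^'n^'n" and u :: "real^'n"
  assumes "symm A" and "symm G"
    and "pd A" and "psd (G - A)"
    and "u \<noteq> 0"
  shows "Vf A G - Vf A (SR1 A G u) = ln (1 + (nu A G u)^2)"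
proof (cases "(G - A) *v u = 0")
  case True
  then show ?thesis by (simp add: SR1_def nu_def)
next
  case False
  define D where "D = G - A"
  define w where "w = D *v u"
  define c where "c = u \<bullet> w"
  have symD: "symm D" using assms(1,2) by (simp add: symm_def D_def transpose_def vec_eq_iff)
  have wne: "w \<noteq> 0" using False by (simp add: w_def D_def)
  have cpos: "c > 0"
  proof -
    have "c \<ge> 0" using assms(4) by (simp add: c_def w_def D_def psd_def)
    moreover have "c \<noteq> 0" using psd_zero[OF symD assms(4)[folded D_def], of u] wne
      by (auto simp: c_def w_def)
    ultimately show ?thesis by simp
  qed
  have GAD: "G = A + D" by (simp add: D_def)
  have pdG: "pd G"
    unfolding pd_def
  proof (intro allI impI)
    fix x :: "real^'n" assume "x \<noteq> 0"
    then have "x \<bullet> (A *v x) > 0" using assms(3) by (simp add: pd_def)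
    moreover have "x \<bullet> (D *v x) \<ge> 0" using assms(4) by (simp add: psd_def D_def)
    ultimately show "0 < x \<bullet> (G *v x)" unfolding GAD
      by (simp add: matrix_vector_mult_add_rdistrib inner_add_right)
  qed
  have invG: "invertible G" by (rule pd_invertible[OF pdG])
  define Gi where "Gi = matrix_inv G"
  have GGi: "G ** Gi = mat 1" and GiG: "Gi ** G = mat 1" using inv_props[OF invG] by (auto simp: Gi_def)
  define z where "z = Gi *v w"
  have Gz: "G *v z = w" by (simp add: z_def matrix_vector_mul_assoc GGi)
  have GiG_v: "Gi *v (G *v x) = x" for x by (simp add: matrix_vector_mul_assoc GiG)
  have zne: "z \<noteq> 0" using Gz wne by auto
  define q where "q = w \<bullet> z"
  have qpos: "q > 0"
  proof -
    have "z \<bullet> (G *v z) > 0" using pdG zne by (simp add: pd_def)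
    then show ?thesis by (simp add: q_def Gz inner_commute)
  qed
  have uDz: "u \<bullet> (D *v z) = q" using symm_inner[OF symD, of u z] by (simp add: q_def w_def)
  have zDu: "z \<bullet> (D *v u) = q" by (simp add: q_def w_def inner_commute)
  have zAz: "z \<bullet> (A *v z) = q - z \<bullet> (D *v z)"
  proof -
    have "A = G - D" by (simp add: D_def)
    then have "z \<bullet> (A *v z) = z \<bullet> (G *v z) - z \<bullet> (D *v z)"
      by (simp add: matrix_vector_mult_diff_rdistrib inner_diff_right)
    then show ?thesis by (simp add: Gz q_def inner_commute)
  qed
  have cq: "c - q = (u - z) \<bullet> (D *v (u - z)) + z \<bullet> (A *v z)"
    unfolding zAz
    by (simp add: matrix_vector_mult_diff_distrib inner_diff_left inner_diff_right uDz zDu[unfolded w_def[symmetric]] c_def w_def[symmetric])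
  have cqpos: "c - q > 0"
  proof -
    have "(u - z) \<bullet> (D *v (u - z)) \<ge> 0" using assms(4) by (simp add: psd_def D_def)
    moreover have "z \<bullet> (A *v z) > 0" using assms(3) zne by (simp add: pd_def)
    ultimately show ?thesis unfolding cq by simp
  qed
  have num: "u \<bullet> ((G - A) ** matrix_inv G ** (G - A) *v u) = q"
    unfolding D_def[symmetric] Gi_def[symmetric]
    by (simp add: matrix_vector_mul_assoc[symmetric] w_def[symmetric] z_def[symmetric] uDz)
  have den: "u \<bullet> ((A - A ** matrix_inv G ** A) *v u) = c - q"
  proof -
    have Au: "A *v u = G *v u - w" by (simp add: w_def D_def matrix_vector_mult_diff_rdistrib)
    have GiAu: "Gi *v (A *v u) = u - z" unfolding Au
      by (simp add: matrix_vector_mult_diff_distrib GiG_v z_def)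
    have "u \<bullet> ((A - A ** Gi ** A) *v u) = u \<bullet> (A *v u) - u \<bullet> (A *v (Gi *v (A *v u)))"
      by (simp add: matrix_vector_mult_diff_rdistrib matrix_vector_mul_assoc matrix_mul_assoc inner_diff_right)
    also have "\<dots> = u \<bullet> (A *v z)" unfolding GiAu
      by (simp add: matrix_vector_mult_diff_distrib inner_diff_right)
    also have "\<dots> = (A *v u) \<bullet> z" by (rule symm_inner[OF assms(1)])
    also have "\<dots> = (G *v u) \<bullet> z - q" unfolding Au by (simp add: inner_diff_left q_def)
    also have "(G *v u) \<bullet> z = u \<bullet> w" using symm_inner[OF assms(2), of u z] by (simp add: Gz)
    finally show ?thesis by (simp add: Gi_def c_def)
  qed
  have nu2: "(nu A G u)^2 = q / (c - q)"
    using False qpos cqpos by (simp add: nu_def num den)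
  have uvD: "u v* D = w"
    using symD by (simp add: w_def symm_def flip: transpose_matrix_vector)
  define a where "a = (- 1 / c) *\<^sub>R z"
  have SR: "SR1 A G u = G ** (mat 1 + (\<chi> i j. a$i * w$j))"
  proof -
    have "G ** (mat 1 + (\<chi> i j. a$i * w$j)) = G + (\<chi> i j. (G *v a)$i * w$j)"
      by (simp add: matrix_add_ldistrib outer_mult)
    also have "G *v a = (- 1 / c) *\<^sub>R w" unfolding a_def matrix_vector_mult_scaleR Gz by (rule refl)
    finally have "G ** (mat 1 + (\<chi> i j. a$i * w$j)) = G - (1 / c) *\<^sub>R (\<chi> i j. w$i * w$j)"
      by (simp add: vec_eq_iff)
    then show ?thesis using False
      by (simp add: SR1_def uvD w_def[symmetric] D_def[symmetric] c_def[symmetric])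
  qed
  have aw: "a \<bullet> w = - q / c" by (simp add: a_def q_def inner_commute)
  have detSR: "det (SR1 A G u) = det G * ((c - q) / c)"
    unfolding SR det_mul det_rank1 aw using cpos by (simp add: field_simps)
  have dG: "det G > 0" by (rule pd_det_pos[OF pdG])
  have dA: "det A > 0" by (rule pd_det_pos[OF assms(3)])
  have invA: "invertible A" by (rule pd_invertible[OF assms(3)])
  have dAi: "det (matrix_inv A) = 1 / det A"
    using arg_cong[OF inv_props(1)[OF invA], of det] dA by (simp add: det_mul field_simps)
  have "Vf A G - Vf A (SR1 A G u) = ln (det G / det A) - ln (det G / det A * ((c - q) / c))"
    unfolding Vf_def det_mul detSR dAi by (simp add: field_simps)
  also have "\<dots> = - ln ((c - q) / c)"
  proof -
    have h1: "det G / det A > 0" and h2: "(c - q) / c > 0" using dG dA cpos cqpos by auto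
    show ?thesis unfolding ln_mult using h1 h2 dG dA cpos cqpos by auto
  qed
  also have "\<dots> = ln (c / (c - q))"
    using cpos cqpos by (simp add: ln_div)
  also have "c / (c - q) = 1 + q / (c - q)" using cqpos by (simp add: field_simps)
  finally show ?thesis by (simp add: nu2)
qed

end
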